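(* Let $L:\mathbb{R}^d\to\mathbb{R}^{\mathcal{Y}}_+$ be a polyhedral loss. Then $L$ is minimizable and elicits a property $\Gamma:=\mathrm{prop}[L]$. Moreover, the range of $\Gamma$, namely $\{\Gamma(p)\subseteq\mathbb{R}^d:p\in\Delta_{\mathcal{Y}}\}$, is a finite set of closed polyhedra.
   Context: $\mathcal{Y}$ is a finite label set, $\Delta_{\mathcal{Y}}$ the probability simplex, $\mathbb{R}^{\mathcal{Y}}_+$ the nonnegative orthant. $L:\mathbb{R}^d\to\mathbb{R}^{\mathcal{Y}}_+$ is polyhedral if each $u\mapsto L(u)_y$ is a pointwise maximum of finitely many affine functions. $L$ is minimizable if $\inf_u\langle p,L(u)\rangle$ is attained for every $p\in\Delta_{\mathcal{Y}}$; in that case it elicits $\mathrm{prop}[L](p)=\arg\min_u\langle p,L(u)\rangle$. *)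

theory Defs
  imports "HOL-Analysis.Analysis"
begin

text \<open>Losses L : R^d -> R^Y_+ are modelled as functions real^'d => 'y => real,
  with the finite label set Y given by the finite type 'y.\<close>

definition prob_simplex :: "('y::finite \<Rightarrow> real) set" where
  "prob_simplex = {p. (\<forall>y. 0 \<le> p y) \<and> (\<Sum>y\<in>UNIV. p y) = 1}"

definition exp_loss :: "('u \<Rightarrow> 'y::finite \<Rightarrow> real) \<Rightarrow> ('y \<Rightarrow> real) \<Rightarrow> 'u \<Rightarrow> real" where
  "exp_loss L p u = (\<Sum>y\<in>UNIV. p y * L u y)"

definition polyhedral_loss :: "(real^'d \<Rightarrow> 'y::finite \<Rightarrow> real) \<Rightarrow> bool" where
  "polyhedral_loss L \<longleftrightarrow>
     (\<forall>y. \<exists>A :: ((real^'d) \<times> real) set. finite A \<and> A \<noteq> {} \<and>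
          (\<forall>u. L u y = Max ((\<lambda>(a,b). a \<bullet> u + b) ` A)))"

definition nonneg_loss :: "('u \<Rightarrow> 'y \<Rightarrow> real) \<Rightarrow> bool" where
  "nonneg_loss L \<longleftrightarrow> (\<forall>u y. 0 \<le> L u y)"

definition minimizable :: "('u \<Rightarrow> 'y::finite \<Rightarrow> real) \<Rightarrow> bool" where
  "minimizable L \<longleftrightarrow>
     (\<forall>p\<in>prob_simplex. \<exists>u. \<forall>v. exp_loss L p u \<le> exp_loss L p v)"

definition prop_of :: "('u \<Rightarrow> 'y::finite \<Rightarrow> real) \<Rightarrow> ('y \<Rightarrow> real) \<Rightarrow> 'u set" where
  "prop_of L p = {u. \<forall>v. exp_loss L p u \<le> exp_loss L p v}"

end

theory Submission
  imports Defs
begin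

lemma lp_attain:
  fixes J :: "('a::real_inner \<times> real) set" and h :: 'a
  assumes "finite J"
  shows "affine S \<Longrightarrow> S \<inter> {x. \<forall>(a,b)\<in>J. a \<bullet> x \<le> b} \<noteq> {}
    \<Longrightarrow> (\<forall>x\<in>S \<inter> {x. \<forall>(a,b)\<in>J. a \<bullet> x \<le> b}. B \<le> h \<bullet> x)
    \<Longrightarrow> \<exists>z\<in>S \<inter> {x. \<forall>(a,b)\<in>J. a \<bullet> x \<le> b}. \<forall>x\<in>S \<inter> {x. \<forall>(a,b)\<in>J. a \<bullet> x \<le> b}. h \<bullet> z \<le> h \<bullet> x"
  using assms
proof (induction J arbitrary: S B rule: finite_induct)
  case empty
  then obtain z where z: "z \<in> S" by auto
  have "h \<bullet> z \<le> h \<bullet> x" if x: "x \<in> S" for x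
  proof (rule ccontr)
    assume "\<not> h \<bullet> z \<le> h \<bullet> x"
    hence d: "h \<bullet> z - h \<bullet> x > 0" by simp
    define t where "t = (h \<bullet> z - B + 1) / (h \<bullet> z - h \<bullet> x)"
    have "(1 - t) *\<^sub>R z + t *\<^sub>R x \<in> S" using mem_affine[OF empty(1) z x] by simp
    hence "B \<le> h \<bullet> ((1 - t) *\<^sub>R z + t *\<^sub>R x)" using empty(3) by auto
    also have "h \<bullet> ((1 - t) *\<^sub>R z + t *\<^sub>R x) = h \<bullet> z - t * (h \<bullet> z - h \<bullet> x)"
      by (simp add: inner_add_right algebra_simps)
    also have "\<dots> = B - 1" using d unfolding t_def by (simp add: field_simps)
    finally show False by simp
  qed
  thus ?case using z by auto
next
  case (insert q J)
  obtain a0 b0 where q: "q = (a0, b0)" by force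
  define P' where "P' = S \<inter> {x. \<forall>(a,b)\<in>J. a \<bullet> x \<le> b}"
  define P where "P = S \<inter> {x. \<forall>(a,b)\<in>insert q J. a \<bullet> x \<le> b}"
  have PP: "P = P' \<inter> {x. a0 \<bullet> x \<le> b0}" unfolding P_def P'_def q by auto
  have Pne: "P \<noteq> {}" and PB: "\<forall>x\<in>P. B \<le> h \<bullet> x" using insert unfolding P_def by auto
  show ?case
  proof (cases "\<exists>x'\<in>P'. b0 < a0 \<bullet> x' \<and> (\<forall>x\<in>P. h \<bullet> x' \<le> h \<bullet> x)")
    case True
    then obtain x' where x': "x' \<in> P'" "b0 < a0 \<bullet> x'" "\<forall>x\<in>P. h \<bullet> x' \<le> h \<bullet> x" by blast
    define S2 where "S2 = S \<inter> {x. a0 \<bullet> x = b0}"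
    have aS2: "affine S2" unfolding S2_def using insert(4) affine_hyperplane by blast
    define Q where "Q = S2 \<inter> {x. \<forall>(a,b)\<in>J. a \<bullet> x \<le> b}"
    have QP: "Q \<subseteq> P" unfolding Q_def S2_def PP P'_def by auto
    have seg: "\<exists>z\<in>Q. h \<bullet> z \<le> h \<bullet> x" if x: "x \<in> P" for x
    proof -
      have xS: "x \<in> S" and xJ: "\<forall>(a,b)\<in>J. a \<bullet> x \<le> b" and xa: "a0 \<bullet> x \<le> b0"
        using x unfolding PP P'_def by auto
      have x'S: "x' \<in> S" and x'J: "\<forall>(a,b)\<in>J. a \<bullet> x' \<le> b"
        using x'(1) unfolding P'_def by auto
      define t where "t = (b0 - a0 \<bullet> x) / (a0 \<bullet> x' - a0 \<bullet> x)"
      have dpos: "a0 \<bullet> x' - a0 \<bullet> x > 0" using xa x'(2) by simp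
      have t0: "0 \<le> t" and t1: "t \<le> 1" unfolding t_def using dpos xa x'(2)
        by (auto simp: field_simps)
      define z where "z = (1 - t) *\<^sub>R x + t *\<^sub>R x'"
      have zS: "z \<in> S" unfolding z_def using mem_affine[OF insert(4) xS x'S] by simp
      have "a0 \<bullet> z = a0 \<bullet> x + t * (a0 \<bullet> x' - a0 \<bullet> x)"
        unfolding z_def by (simp add: inner_add_right algebra_simps)
      also have "\<dots> = b0" unfolding t_def using dpos by (simp add: field_simps)
      finally have za: "a0 \<bullet> z = b0" .
      have zJ: "a \<bullet> z \<le> b" if ab: "(a,b) \<in> J" for a b
      proof -
        have "a \<bullet> z = (1 - t) * (a \<bullet> x) + t * (a \<bullet> x')"
          unfolding z_def by (simp add: inner_add_right)
        also have "\<dots> \<le> b" using xJ x'J ab t0 t1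
          by (intro convex_bound_le) auto
        finally show ?thesis .
      qed
      have "h \<bullet> z = (1 - t) * (h \<bullet> x) + t * (h \<bullet> x')"
        unfolding z_def by (simp add: inner_add_right)
      also have "\<dots> \<le> h \<bullet> x" using x'(3) x t0 t1
        by (intro convex_bound_le) auto
      finally have "h \<bullet> z \<le> h \<bullet> x" .
      moreover have "z \<in> Q" unfolding Q_def S2_def using zS za zJ by auto
      ultimately show ?thesis by blast
    qed
    have Qne: "Q \<noteq> {}" using seg Pne by blast
    have QB: "\<forall>x\<in>Q. B \<le> h \<bullet> x" using QP PB by blast
    obtain zs where zs: "zs \<in> Q" "\<forall>x\<in>Q. h \<bullet> zs \<le> h \<bullet> x"
      using insert.IH[OF aS2, of B] Qne QB unfolding Q_def by blast
    have "\<forall>x\<in>P. h \<bullet> zs \<le> h \<bullet> x"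
      using seg zs(2) by force
    then show ?thesis using zs(1) QP unfolding P_def by blast
  next
    case False
    have bdd: "\<forall>x\<in>P'. B - 1 \<le> h \<bullet> x"
    proof
      fix x assume x: "x \<in> P'"
      show "B - 1 \<le> h \<bullet> x"
      proof (rule ccontr)
        assume "\<not> B - 1 \<le> h \<bullet> x"
        hence hx: "h \<bullet> x < B - 1" by simp
        have "x \<notin> P" using PB hx by force
        hence "b0 < a0 \<bullet> x" using x unfolding PP by auto
        moreover have "\<forall>y\<in>P. h \<bullet> x \<le> h \<bullet> y" using PB hx by force
        ultimately show False using False x by blast
      qed
    qed
    have "P' \<noteq> {}" using Pne PP by auto
    then obtain z' where z': "z' \<in> P'" "\<forall>x\<in>P'. h \<bullet> z' \<le> h \<bullet> x"
      using insert.IH[OF insert(4), of "B - 1"] bdd unfolding P'_def by blast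
    have "\<forall>x\<in>P. h \<bullet> z' \<le> h \<bullet> x" using z'(2) PP by auto
    hence "a0 \<bullet> z' \<le> b0" using False z'(1) by force
    hence "z' \<in> P" using z'(1) PP by auto
    thus ?thesis using z'(2) PP unfolding P_def by blast
  qed
qed


theorem lemma2:
  fixes L :: "real^'d \<Rightarrow> 'y::finite \<Rightarrow> real"
  assumes "nonneg_loss L" and "polyhedral_loss L"
  shows "minimizable L
    \<and> (\<forall>p\<in>prob_simplex. prop_of L p \<noteq> {})
    \<and> finite (prop_of L ` prob_simplex)
    \<and> (\<forall>S\<in>prop_of L ` prob_simplex. closed S \<and> polyhedron S)"
proof -
  obtain A where A: "\<And>y. finite (A y)" "\<And>y. A y \<noteq> {}"
    "\<And>u y. L u y = Max ((\<lambda>(a,b). a \<bullet> u + b) ` A y)"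
    using assms(2) unfolding polyhedral_loss_def by metis
  define pc :: "(real^'d) \<times> real \<Rightarrow> real^'d \<Rightarrow> real" where "pc q u = fst q \<bullet> u + snd q" for q u
  have Lmax: "L u y = Max ((\<lambda>q. pc q u) ` A y)" for u y
  proof -
    have "(\<lambda>(a,b). a \<bullet> u + b) = (\<lambda>q. pc q u)" by (simp add: pc_def fun_eq_iff case_prod_beta)
    thus ?thesis using A(3) by simp
  qed
  have Lge: "pc q u \<le> L u y" if "q \<in> A y" for q u y
    unfolding Lmax using A(1) that by (intro Max_ge) auto
  have Lex: "\<exists>q\<in>A y. pc q u = L u y" for u y
  proof -
    have "Max ((\<lambda>q. pc q u) ` A y) \<in> (\<lambda>q. pc q u) ` A y"
      using A(1,2) by (intro Max_in) auto
    thus ?thesis unfolding Lmax by auto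
  qed
  define c where "c p \<sigma> = (\<Sum>y\<in>UNIV. p y *\<^sub>R fst (\<sigma> y))" for p :: "'y \<Rightarrow> real" and \<sigma> :: "'y \<Rightarrow> (real^'d) \<times> real"
  define e where "e p \<sigma> = (\<Sum>y\<in>UNIV. p y * snd (\<sigma> y))" for p :: "'y \<Rightarrow> real" and \<sigma> :: "'y \<Rightarrow> (real^'d) \<times> real"
  have lin: "(\<Sum>y\<in>UNIV. p y * pc (\<sigma> y) u) = c p \<sigma> \<bullet> u + e p \<sigma>" for p \<sigma> u
    by (simp add: pc_def c_def e_def inner_sum_left sum.distrib algebra_simps)
  have sel: "exp_loss L p u \<le> t \<longleftrightarrow> (\<forall>\<sigma>\<in>PiE UNIV A. c p \<sigma> \<bullet> u + e p \<sigma> \<le> t)"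
    if p0: "\<forall>y. 0 \<le> p y" for p u t
  proof
    assume H: "exp_loss L p u \<le> t"
    show "\<forall>\<sigma>\<in>PiE UNIV A. c p \<sigma> \<bullet> u + e p \<sigma> \<le> t"
    proof
      fix \<sigma> assume s: "\<sigma> \<in> PiE UNIV A"
      have "c p \<sigma> \<bullet> u + e p \<sigma> = (\<Sum>y\<in>UNIV. p y * pc (\<sigma> y) u)" by (simp add: lin)
      also have "\<dots> \<le> (\<Sum>y\<in>UNIV. p y * L u y)"
        using s p0 by (intro sum_mono mult_left_mono Lge) auto
      also have "\<dots> \<le> t" using H unfolding exp_loss_def .
      finally show "c p \<sigma> \<bullet> u + e p \<sigma> \<le> t" .
    qed
  next
    assume H: "\<forall>\<sigma>\<in>PiE UNIV A. c p \<sigma> \<bullet> u + e p \<sigma> \<le> t"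
    define \<sigma> where "\<sigma> y = (SOME q. q \<in> A y \<and> pc q u = L u y)" for y
    have s: "\<sigma> y \<in> A y \<and> pc (\<sigma> y) u = L u y" for y
      proof -
      have "\<exists>q. q \<in> A y \<and> pc q u = L u y" using Lex[of y u] by blast
      thus ?thesis unfolding \<sigma>_def by (rule someI_ex)
    qed
    have "\<sigma> \<in> PiE UNIV A" using s by auto
    hence "c p \<sigma> \<bullet> u + e p \<sigma> \<le> t" using H by blast
    thus "exp_loss L p u \<le> t" unfolding exp_loss_def using s by (simp flip: lin)
  qed
  have finS: "finite (PiE UNIV A)" using A(1) by (intro finite_PiE) auto
  have nonnegE: "0 \<le> exp_loss L p u" if "\<forall>y. 0 \<le> p y" for p u
    unfolding exp_loss_def using that assms(1) unfolding nonneg_loss_def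
    by (intro sum_nonneg mult_nonneg_nonneg) auto
  have exist: "\<exists>u. \<forall>v. exp_loss L p u \<le> exp_loss L p v" if p0: "\<forall>y. 0 \<le> p y" for p
  proof -
    define J where "J = (\<lambda>\<sigma>. ((c p \<sigma>, -1::real), - e p \<sigma>)) ` PiE UNIV A"
    have Jeq: "UNIV \<inter> {x. \<forall>(a,b)\<in>J. a \<bullet> x \<le> b} = {(u,t). exp_loss L p u \<le> t}"
    proof (intro set_eqI)
      fix z :: "(real^'d) \<times> real"
      obtain u t where z: "z = (u,t)" by force
      show "z \<in> UNIV \<inter> {x. \<forall>(a,b)\<in>J. a \<bullet> x \<le> b} \<longleftrightarrow> z \<in> {(u,t). exp_loss L p u \<le> t}"
        unfolding z J_def using sel[OF p0, of u t] by (force simp: inner_Pair algebra_simps)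
    qed
    have "\<exists>z\<in>UNIV \<inter> {x. \<forall>(a,b)\<in>J. a \<bullet> x \<le> b}. \<forall>x\<in>UNIV \<inter> {x. \<forall>(a,b)\<in>J. a \<bullet> x \<le> b}.
        (0::real^'d, 1::real) \<bullet> z \<le> (0, 1) \<bullet> x"
    proof (rule lp_attain)
      show "finite J" unfolding J_def using finS by simp
      show "affine (UNIV :: ((real^'d) \<times> real) set)" by simp
      show "UNIV \<inter> {x. \<forall>(a,b)\<in>J. a \<bullet> x \<le> b} \<noteq> {}" unfolding Jeq by auto
      show "\<forall>x\<in>UNIV \<inter> {x. \<forall>(a,b)\<in>J. a \<bullet> x \<le> b}. 0 \<le> (0::real^'d, 1::real) \<bullet> x"
        unfolding Jeq using nonnegE[OF p0] by (auto simp: inner_Pair intro: order_trans)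
    qed
    then obtain u t where ut: "exp_loss L p u \<le> t" and mn: "\<forall>v s. exp_loss L p v \<le> s \<longrightarrow> t \<le> s"
      unfolding Jeq by (auto simp: inner_Pair)
    show ?thesis using ut mn by (meson order_trans order_refl)
  qed
  define pat where "pat u = (\<lambda>y. {q\<in>A y. pc q u = L u y})" for u
  have key: "v \<in> prop_of L p" if u: "u \<in> prop_of L p" and pv: "pat v = pat u" for p u v
  proof -
    define F where "F = exp_loss L p"
    define qy where "qy y = (SOME q. q \<in> A y \<and> pc q u = L u y)" for y
    have qy: "qy y \<in> A y \<and> pc (qy y) u = L u y" for y
      proof -
      have "\<exists>q. q \<in> A y \<and> pc q u = L u y" using Lex[of y u] by blast
      thus ?thesis unfolding qy_def by (rule someI_ex)
    qed
    have qyv: "pc (qy y) v = L v y" for y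
    proof -
      have "qy y \<in> pat u y" using qy unfolding pat_def by auto
      hence "qy y \<in> pat v y" using pv by simp
      thus ?thesis unfolding pat_def by auto
    qed
    define w where "w t = u + t *\<^sub>R (u - v)" for t :: real
    have pcw: "pc q (w t) = pc q u + t * (pc q u - pc q v)" for q t
      unfolding pc_def w_def by (simp add: inner_add_right inner_diff_right algebra_simps)
    have ev: "eventually (\<lambda>t. \<forall>y\<in>UNIV. \<forall>q\<in>A y. pc q (w t) \<le> pc (qy y) (w t)) (at_right 0)"
    proof (intro eventually_ball_finite ballI)
      fix y q assume q: "q \<in> A y"
      show "eventually (\<lambda>t. pc q (w t) \<le> pc (qy y) (w t)) (at_right 0)"
      proof (cases "q \<in> pat u y")
        case True
        hence "q \<in> pat v y" using pv by simp
        hence "pc q v = pc (qy y) v" using qyv unfolding pat_def by auto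
        moreover have "pc q u = pc (qy y) u" using True qy unfolding pat_def by auto
        ultimately show ?thesis unfolding pcw by simp
      next
        case False
        hence D: "pc q u - pc (qy y) u < 0" using q qy Lge[OF q, of u] unfolding pat_def by auto
        define K where "K = (pc q u - pc q v) - (pc (qy y) u - pc (qy y) v)"
        have "((\<lambda>t. (pc q u - pc (qy y) u) + t * K) \<longlongrightarrow> (pc q u - pc (qy y) u) + 0 * K) (at_right 0)"
          by (intro tendsto_intros)
        hence "eventually (\<lambda>t. (pc q u - pc (qy y) u) + t * K < 0) (at_right 0)"
          using D by (intro order_tendstoD(2)) auto
        thus ?thesis
          by eventually_elim (simp add: pcw K_def algebra_simps)
      qed
    qed (auto simp: A(1))
    have evc: "eventually (\<lambda>t. 0 < t \<and> (\<forall>y\<in>UNIV. \<forall>q\<in>A y. pc q (w t) \<le> pc (qy y) (w t))) (at_right (0::real))"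
      using ev eventually_at_right_less[of 0] by (intro eventually_conj) auto
    then obtain t where t0: "0 < t" and tw: "\<forall>y. \<forall>q\<in>A y. pc q (w t) \<le> pc (qy y) (w t)"
      using eventually_happens[OF evc] trivial_limit_at_right_real by auto
    have Lw: "L (w t) y = pc (qy y) (w t)" for y
      unfolding Lmax using A(1) tw qy by (intro Max_eqI) auto
    have "F (w t) = (\<Sum>y\<in>UNIV. p y * (L u y + t * (L u y - L v y)))"
      unfolding F_def exp_loss_def Lw pcw using qy qyv by simp
    also have "\<dots> = F u + t * (F u - F v)"
      unfolding F_def exp_loss_def
      by (simp add: sum.distrib sum_distrib_left sum_subtractf algebra_simps)
    finally have Fw: "F (w t) = F u + t * (F u - F v)" .
    have "F u \<le> F (w t)" using u unfolding prop_of_def F_def by auto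
    hence "0 \<le> t * (F u - F v)" using Fw by simp
    hence "F v \<le> F u" using t0 by (simp add: zero_le_mult_iff)
    thus ?thesis using u unfolding prop_of_def F_def by (auto intro: order_trans)
  qed
  have p0: "\<forall>y. 0 \<le> p y" if "p \<in> prob_simplex" for p
    using that unfolding prob_simplex_def by auto
  have m: "minimizable L" unfolding minimizable_def using exist p0 by blast
  have ne: "\<forall>p\<in>prob_simplex. prop_of L p \<noteq> {}"
    using exist p0 unfolding prop_of_def by blast
  have finpat: "finite (range pat)"
  proof (rule finite_subset)
    show "range pat \<subseteq> PiE UNIV (\<lambda>y. Pow (A y))" unfolding pat_def by auto
    show "finite (PiE UNIV (\<lambda>y. Pow (A y)))" using A(1) by (intro finite_PiE) auto
  qed
  have "prop_of L ` prob_simplex \<subseteq> (\<lambda>T. {v. pat v \<in> T}) ` Pow (range pat)"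
  proof
    fix M assume "M \<in> prop_of L ` prob_simplex"
    then obtain p where M: "M = prop_of L p" by blast
    have "M = {v. pat v \<in> pat ` M}" using key unfolding M by blast
    thus "M \<in> (\<lambda>T. {v. pat v \<in> T}) ` Pow (range pat)" by blast
  qed
  hence fin: "finite (prop_of L ` prob_simplex)"
    using finpat by (meson finite_Pow_iff finite_imageI finite_subset)
  have poly: "closed S \<and> polyhedron S" if Sin: "S \<in> prop_of L ` prob_simplex" for S
  proof -
    obtain p where p: "p \<in> prob_simplex" and S: "S = prop_of L p" using Sin by blast
    obtain u0 where u0: "\<forall>v. exp_loss L p u0 \<le> exp_loss L p v" using exist p0[OF p] by blast
    define m where "m = exp_loss L p u0"
    have "S = {u. exp_loss L p u \<le> m}" unfolding S prop_of_def m_def using u0 by (auto intro: order_trans)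
    also have "\<dots> = \<Inter> ((\<lambda>\<sigma>. {u. c p \<sigma> \<bullet> u \<le> m - e p \<sigma>}) ` PiE UNIV A)"
      using sel[OF p0[OF p]] by (auto simp: algebra_simps)
    finally have SI: "S = \<Inter> ((\<lambda>\<sigma>. {u. c p \<sigma> \<bullet> u \<le> m - e p \<sigma>}) ` PiE UNIV A)" .
    have "polyhedron S" unfolding SI using finS by (intro polyhedron_Inter) (auto simp: polyhedron_halfspace_le)
    thus ?thesis using polyhedron_imp_closed by blast
  qed
  show ?thesis using m ne fin poly by blast
qed

end
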